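(* Let $G$ be a finite, simple, undirected, connected graph. A vertex $v\in V(G)$ is an $\mathcal{L}$-branch leaf of some DFS ordering of $G$ if and only if $v$ is the end-vertex (last vertex) of some DFS ordering of $G$.
   Context: A vertex ordering of $G$ is a bijection $\sigma:\{1,\dots,n\}\to V(G)$; $u\prec_\sigma w$ means $u$ comes before $w$. Depth First Search (DFS) orderings are produced by the label search: initially all labels are $\emptyset$; for $i=1,\dots,n$ choose any unnumbered vertex $x$ such that there is no unnumbered $y$ with $\mathrm{label}(x)\prec\mathrm{label}(y)$, set $\sigma(i)=x$, and add $i$ to the labels of the unnumbered neighbors of $x$, where $A\prec B$ iff ($A=\emptyset$ and $B\neq\emptyset$) or $\max(A)<\max(B)$. The $\mathcal{L}$-tree of $\sigma$ is the spanning tree containing, for each $v\neq\sigma(1)$, the edge from $v$ to its rightmost neighbor $w$ with $w\prec_\sigma v$. A vertex $v\neq\sigma(1)$ is an $\mathcal{L}$-branch leaf of $\sigma$ if it is a leaf of the $\mathcal{L}$-tree of $\sigma$. *)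

theory Defs
  imports Main
begin

definition simple_graph :: "'a set \<Rightarrow> ('a \<Rightarrow> 'a \<Rightarrow> bool) \<Rightarrow> bool" where
  "simple_graph V E \<longleftrightarrow> finite V \<and> (\<forall>x y. E x y \<longrightarrow> x \<in> V \<and> y \<in> V)
     \<and> (\<forall>x y. E x y \<longrightarrow> E y x) \<and> (\<forall>x. \<not> E x x)"

definition connected_graph :: "'a set \<Rightarrow> ('a \<Rightarrow> 'a \<Rightarrow> bool) \<Rightarrow> bool" where
  "connected_graph V E \<longleftrightarrow> V \<noteq> {} \<and> (\<forall>x\<in>V. \<forall>y\<in>V. E\<^sup>*\<^sup>* x y)"

definition vertex_ordering :: "'a set \<Rightarrow> (nat \<Rightarrow> 'a) \<Rightarrow> bool" where
  "vertex_ordering V \<sigma> \<longleftrightarrow> bij_betw \<sigma> {1..card V} V"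

definition label_less :: "nat set \<Rightarrow> nat set \<Rightarrow> bool" where
  "label_less A B \<longleftrightarrow> (A = {} \<and> B \<noteq> {}) \<or> (A \<noteq> {} \<and> B \<noteq> {} \<and> Max A < Max B)"

definition dfs_label :: "('a \<Rightarrow> 'a \<Rightarrow> bool) \<Rightarrow> (nat \<Rightarrow> 'a) \<Rightarrow> nat \<Rightarrow> 'a \<Rightarrow> nat set" where
  "dfs_label E \<sigma> i x = {j \<in> {1..<i}. E (\<sigma> j) x}"

definition dfs_ordering :: "'a set \<Rightarrow> ('a \<Rightarrow> 'a \<Rightarrow> bool) \<Rightarrow> (nat \<Rightarrow> 'a) \<Rightarrow> bool" where
  "dfs_ordering V E \<sigma> \<longleftrightarrow> vertex_ordering V \<sigma> \<and>
     (\<forall>i\<in>{1..card V}. \<forall>k\<in>{i..card V}.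
        \<not> label_less (dfs_label E \<sigma> i (\<sigma> i)) (dfs_label E \<sigma> i (\<sigma> k)))"

definition pos :: "'a set \<Rightarrow> (nat \<Rightarrow> 'a) \<Rightarrow> 'a \<Rightarrow> nat" where
  "pos V \<sigma> v = inv_into {1..card V} \<sigma> v"

definition L_parent :: "'a set \<Rightarrow> ('a \<Rightarrow> 'a \<Rightarrow> bool) \<Rightarrow> (nat \<Rightarrow> 'a) \<Rightarrow> 'a \<Rightarrow> 'a \<Rightarrow> bool" where
  "L_parent V E \<sigma> v w \<longleftrightarrow> E v w \<and> pos V \<sigma> w < pos V \<sigma> v \<and>
     (\<forall>u. E v u \<and> pos V \<sigma> u < pos V \<sigma> v \<longrightarrow> pos V \<sigma> u \<le> pos V \<sigma> w)"

definition L_tree_edges :: "'a set \<Rightarrow> ('a \<Rightarrow> 'a \<Rightarrow> bool) \<Rightarrow> (nat \<Rightarrow> 'a) \<Rightarrow> 'a set set" where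
  "L_tree_edges V E \<sigma> = {{v, w} | v w. v \<in> V \<and> v \<noteq> \<sigma> 1 \<and> L_parent V E \<sigma> v w}"

definition L_branch_leaf :: "'a set \<Rightarrow> ('a \<Rightarrow> 'a \<Rightarrow> bool) \<Rightarrow> (nat \<Rightarrow> 'a) \<Rightarrow> 'a \<Rightarrow> bool" where
  "L_branch_leaf V E \<sigma> v \<longleftrightarrow> v \<in> V \<and> v \<noteq> \<sigma> 1 \<and>
     card {w. {v, w} \<in> L_tree_edges V E \<sigma>} = 1"

end

theory Submission
  imports Defs
begin

definition four :: "('a \<Rightarrow> 'a \<Rightarrow> bool) \<Rightarrow> (nat \<Rightarrow> 'a) \<Rightarrow> nat \<Rightarrow> bool" where
"four E \<sigma> n \<longleftrightarrow> (\<forall>i j k. 1 \<le> i \<longrightarrow> i < j \<longrightarrow> j < k \<longrightarrow> k \<le> n \<longrightarrow> E (\<sigma> i) (\<sigma> k) \<longrightarrow> \<not> E (\<sigma> i) (\<sigma> j)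
    \<longrightarrow> (\<exists>l. i < l \<and> l < j \<and> E (\<sigma> l) (\<sigma> j)))"

lemma dfs_four: "dfs_ordering V E \<sigma> \<longleftrightarrow> vertex_ordering V \<sigma> \<and> four E \<sigma> (card V)"
proof
  assume d: "dfs_ordering V E \<sigma>"
  show "vertex_ordering V \<sigma> \<and> four E \<sigma> (card V)"
  proof (intro conjI)
    show "vertex_ordering V \<sigma>" using d dfs_ordering_def by blast
    show "four E \<sigma> (card V)" unfolding four_def
    proof (intro allI impI)
      fix i j k assume h: "1 \<le> i" "i < j" "j < k" "k \<le> card V" "E (\<sigma> i) (\<sigma> k)" "\<not> E (\<sigma> i) (\<sigma> j)"
      define Lj where "Lj = dfs_label E \<sigma> j (\<sigma> j)"
      define Lk where "Lk = dfs_label E \<sigma> j (\<sigma> k)"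
      have nl: "\<not> label_less Lj Lk" using d h unfolding dfs_ordering_def Lj_def Lk_def by auto
      have fin: "finite Lj" "finite Lk" unfolding Lj_def Lk_def dfs_label_def by auto
      have iLk: "i \<in> Lk" using h unfolding Lk_def dfs_label_def by auto
      hence ne: "Lk \<noteq> {}" by auto
      hence "Lj \<noteq> {}" using nl unfolding label_less_def by auto
      have "i \<le> Max Lk" using fin iLk by auto
      also have "Max Lk \<le> Max Lj" using nl ne \<open>Lj \<noteq> {}\<close> unfolding label_less_def by auto
      finally have 1: "i \<le> Max Lj" .
      have "Max Lj \<in> Lj" using fin \<open>Lj \<noteq> {}\<close> by auto
      hence 2: "Max Lj < j" "E (\<sigma> (Max Lj)) (\<sigma> j)" unfolding Lj_def dfs_label_def by auto
      hence "Max Lj \<noteq> i" using h by auto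
      thus "\<exists>l. i < l \<and> l < j \<and> E (\<sigma> l) (\<sigma> j)" using 1 2 by (intro exI[of _ "Max Lj"]) auto
    qed
  qed
next
  assume a: "vertex_ordering V \<sigma> \<and> four E \<sigma> (card V)"
  show "dfs_ordering V E \<sigma>" unfolding dfs_ordering_def
  proof (intro conjI ballI)
    show "vertex_ordering V \<sigma>" using a by blast
    fix i k assume ik: "i \<in> {1..card V}" "k \<in> {i..card V}"
    define Li where "Li = dfs_label E \<sigma> i (\<sigma> i)"
    define Lk where "Lk = dfs_label E \<sigma> i (\<sigma> k)"
    have fin: "finite Li" "finite Lk" unfolding Li_def Lk_def dfs_label_def by auto
    show "\<not> label_less (dfs_label E \<sigma> i (\<sigma> i)) (dfs_label E \<sigma> i (\<sigma> k))"
    proof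
      assume ll: "label_less (dfs_label E \<sigma> i (\<sigma> i)) (dfs_label E \<sigma> i (\<sigma> k))"
      hence ll': "label_less Li Lk" unfolding Li_def Lk_def .
      have "k \<noteq> i" using ll unfolding label_less_def by auto
      have ne: "Lk \<noteq> {}" using ll' unfolding label_less_def by auto
      define x where "x = Max Lk"
      have "x \<in> Lk" using fin ne x_def by auto
      hence x: "1 \<le> x" "x < i" "E (\<sigma> x) (\<sigma> k)" unfolding Lk_def dfs_label_def by auto
      have small: "y < x" if y: "y \<in> Li" for y
      proof -
        have "Li \<noteq> {}" using y by auto
        hence "Max Li < x" using ll' ne x_def unfolding label_less_def by auto
        moreover have "y \<le> Max Li" using fin y by auto
        ultimately show "y < x" by auto
      qed
      have "\<not> E (\<sigma> x) (\<sigma> i)" using small[of x] x unfolding Li_def dfs_label_def by auto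
      moreover have "k \<le> card V" "i < k" using ik \<open>k \<noteq> i\<close> by auto
      ultimately obtain l where l: "x < l" "l < i" "E (\<sigma> l) (\<sigma> i)"
        using a x unfolding four_def by blast
      hence "l \<in> Li" using x unfolding Li_def dfs_label_def by auto
      thus False using small l by fastforce
    qed
  qed
qed

lemma earlier:
  assumes sg: "simple_graph V E" and cg: "connected_graph V E"
    and bij: "bij_betw \<sigma> {1..card V} V" and f: "four E \<sigma> (card V)"
    and j: "2 \<le> j" "j \<le> card V"
  shows "\<exists>l. 1 \<le> l \<and> l < j \<and> E (\<sigma> l) (\<sigma> j)"
proof (rule ccontr)
  assume no: "\<not> (\<exists>l. 1 \<le> l \<and> l < j \<and> E (\<sigma> l) (\<sigma> j))"
  have cross: "\<not> E (\<sigma> a) (\<sigma> c)" if ac: "1 \<le> a" "a < j" "j \<le> c" "c \<le> card V" for a c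
  proof
    assume e: "E (\<sigma> a) (\<sigma> c)"
    show False
    proof (cases "c = j")
      case True thus False using no e that by auto
    next
      case False
      hence "j < c" using that by auto
      have "\<not> E (\<sigma> a) (\<sigma> j)" using no that by auto
      then obtain l where "a < l" "l < j" "E (\<sigma> l) (\<sigma> j)"
        using f e \<open>j < c\<close> ac unfolding four_def by meson
      thus False using no that by auto
    qed
  qed
  define S where "S = \<sigma> ` {1..<j}"
  have V: "\<sigma> 1 \<in> V" "\<sigma> j \<in> V" using bij j by (auto dest: bij_betwE)
  have "E\<^sup>*\<^sup>* (\<sigma> 1) (\<sigma> j)" using cg V unfolding connected_graph_def by blast
  moreover have "E\<^sup>*\<^sup>* (\<sigma> 1) y \<Longrightarrow> y \<in> S" for y
  proof (induction rule: rtranclp_induct)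
    case base thus ?case using j unfolding S_def by auto
  next
    case (step x y)
    then obtain a where a: "1 \<le> a" "a < j" "x = \<sigma> a" unfolding S_def by auto
    have "y \<in> V" using sg step unfolding simple_graph_def by blast
    then obtain c where c: "c \<in> {1..card V}" "y = \<sigma> c" using bij
      by (metis bij_betw_def imageE)
    show ?case
    proof (cases "c < j")
      case True thus ?thesis using c unfolding S_def by auto
    next
      case False thus ?thesis using cross[of a c] a c step by auto
    qed
  qed
  ultimately have "\<sigma> j \<in> S" by blast
  then obtain a where a: "a \<in> {1..<j}" "\<sigma> j = \<sigma> a" unfolding S_def by auto
  have "inj_on \<sigma> {1..card V}" using bij bij_betw_def by blast
  hence "j = a" using a j by (auto dest: inj_onD)
  thus False using a by auto
qed

lemma pos_sigma:
  assumes bij: "bij_betw \<sigma> {1..card V} V" and "i \<in> {1..card V}"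
  shows "pos V \<sigma> (\<sigma> i) = i"
  using assms unfolding pos_def bij_betw_def by (simp add: inv_into_f_f)

lemma pos_in:
  assumes bij: "bij_betw \<sigma> {1..card V} V" and "x \<in> V"
  shows "pos V \<sigma> x \<in> {1..card V}" "\<sigma> (pos V \<sigma> x) = x"
proof -
  have im: "x \<in> \<sigma> ` {1..card V}" using assms unfolding bij_betw_def by auto
  show "pos V \<sigma> x \<in> {1..card V}" unfolding pos_def by (rule inv_into_into[OF im])
  show "\<sigma> (pos V \<sigma> x) = x" unfolding pos_def by (rule f_inv_into_f[OF im])
qed

lemma parent_exists:
  assumes sg: "simple_graph V E" and cg: "connected_graph V E"
    and bij: "bij_betw \<sigma> {1..card V} V" and f: "four E \<sigma> (card V)"
    and j: "2 \<le> j" "j \<le> card V"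
  shows "\<exists>l. 1 \<le> l \<and> l < j \<and> L_parent V E \<sigma> (\<sigma> j) (\<sigma> l)"
proof -
  define M where "M = {l. 1 \<le> l \<and> l < j \<and> E (\<sigma> l) (\<sigma> j)}"
  have fin: "finite M" unfolding M_def by auto
  have ne: "M \<noteq> {}" using earlier[OF sg cg bij f j] unfolding M_def by auto
  define l where "l = Max M"
  have "l \<in> M" using fin ne l_def by auto
  hence l: "1 \<le> l" "l < j" "E (\<sigma> l) (\<sigma> j)" unfolding M_def by auto
  have sym: "E x y \<Longrightarrow> E y x" for x y using sg unfolding simple_graph_def by blast
  have pl: "pos V \<sigma> (\<sigma> l) = l" "pos V \<sigma> (\<sigma> j) = j" using pos_sigma[OF bij] l j by auto
  have "L_parent V E \<sigma> (\<sigma> j) (\<sigma> l)" unfolding L_parent_def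
  proof (intro conjI allI impI)
    show "E (\<sigma> j) (\<sigma> l)" using sym l by blast
    show "pos V \<sigma> (\<sigma> l) < pos V \<sigma> (\<sigma> j)" using pl l by simp
    fix u assume u: "E (\<sigma> j) u \<and> pos V \<sigma> u < pos V \<sigma> (\<sigma> j)"
    have "u \<in> V" using u sg unfolding simple_graph_def by blast
    hence pu: "pos V \<sigma> u \<in> {1..card V}" "\<sigma> (pos V \<sigma> u) = u" using pos_in[OF bij] by auto
    have "pos V \<sigma> u \<in> M" unfolding M_def using pu u pl sym by auto
    thus "pos V \<sigma> u \<le> pos V \<sigma> (\<sigma> l)" using fin pl l_def by auto
  qed
  thus ?thesis using l by blast
qed

lemma swap_step:
  assumes sym: "\<And>x y. E x y \<Longrightarrow> E y x"
    and bij: "bij_betw \<sigma> {1..n} V" and f: "four E \<sigma> n"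
    and ear: "\<And>j. 2 \<le> j \<Longrightarrow> j \<le> n \<Longrightarrow> \<exists>l. 1 \<le> l \<and> l < j \<and> E (\<sigma> l) (\<sigma> j)"
    and p: "1 \<le> p" "p < n" and inv: "\<And>c. p < c \<Longrightarrow> c \<le> n \<Longrightarrow> \<not> E (\<sigma> p) (\<sigma> c)"
  shows "\<exists>\<sigma>' q. bij_betw \<sigma>' {1..n} V \<and> four E \<sigma>' n \<and> p < q \<and> q \<le> n \<and> \<sigma>' q = \<sigma> p
     \<and> (\<forall>c. q < c \<longrightarrow> c \<le> n \<longrightarrow> \<not> E (\<sigma>' q) (\<sigma>' c))"
proof -
  have F: "\<exists>l. i < l \<and> l < j \<and> E (\<sigma> l) (\<sigma> j)"
    if "1 \<le> i" "i < j" "j < k" "k \<le> n" "E (\<sigma> i) (\<sigma> k)" "\<not> E (\<sigma> i) (\<sigma> j)" for i j k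
    using f that unfolding four_def by blast
  define M where "M = {l. 1 \<le> l \<and> l < p+1 \<and> E (\<sigma> l) (\<sigma> (p+1))}"
  have finM: "finite M" unfolding M_def by auto
  have neM: "M \<noteq> {}" using ear[of "p+1"] p unfolding M_def by auto
  define s where "s = Max M"
  have "s \<in> M" using finM neM s_def by auto
  hence s: "1 \<le> s" "s < p+1" "E (\<sigma> s) (\<sigma> (p+1))" unfolding M_def by auto
  have smax: "l \<le> s" if "1 \<le> l" "l < p+1" "E (\<sigma> l) (\<sigma> (p+1))" for l
    using that finM s_def unfolding M_def by auto
  have "s \<noteq> p" using inv[of "p+1"] s p by auto
  hence sp: "s < p" using s by auto
  have fi: "\<not> E (\<sigma> a) (\<sigma> c)" if ac: "s < a" "a \<le> p" "p < c" "c \<le> n" for a c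
  proof
    assume e: "E (\<sigma> a) (\<sigma> c)"
    have ne: "\<not> E (\<sigma> a) (\<sigma> (p+1))" using smax[of a] that s by auto
    show False
    proof (cases "c = p+1")
      case True thus False using ne e by simp
    next
      case False
      then obtain l where "a < l" "l < p+1" "E (\<sigma> l) (\<sigma> (p+1))"
        using F[of a "p+1" c] ac e ne s \<open>c \<noteq> p+1\<close> by auto
      thus False using smax[of l] ac s by auto
    qed
  qed
  define T where "T = {t. p+1 \<le> t \<and> t \<le> n \<and> (\<forall>j. p+1 \<le> j \<longrightarrow> j \<le> t \<longrightarrow> (\<exists>l. s \<le> l \<and> l < j \<and> E (\<sigma> l) (\<sigma> j)))}"
  have finT: "finite T" unfolding T_def by auto
  have pT: "p+1 \<in> T" unfolding T_def using p s by (auto intro!: exI[of _ s] simp: le_Suc_eq)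
  define t where "t = Max T"
  have "t \<in> T" using finT pT t_def by (metis Max_in empty_iff)
  hence t: "p+1 \<le> t" "t \<le> n" "\<And>j. p+1 \<le> j \<Longrightarrow> j \<le> t \<Longrightarrow> \<exists>l. s \<le> l \<and> l < j \<and> E (\<sigma> l) (\<sigma> j)"
    unfolding T_def by auto
  have tnext: "\<not> E (\<sigma> l) (\<sigma> (t+1))" if "t < n" "s \<le> l" "l < t+1" for l
  proof
    assume e: "E (\<sigma> l) (\<sigma> (t+1))"
    have "t+1 \<in> T" unfolding T_def
    proof (intro CollectI conjI allI impI)
      fix j assume "p+1 \<le> j" "j \<le> t+1"
      show "\<exists>l. s \<le> l \<and> l < j \<and> E (\<sigma> l) (\<sigma> j)"
      proof (cases "j = t+1")
        case True thus ?thesis using e that by auto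
      next
        case False thus ?thesis using t \<open>p+1 \<le> j\<close> \<open>j \<le> t+1\<close> by auto
      qed
    qed (use t that in auto)
    hence "t+1 \<le> t" using finT t_def by auto
    thus False by simp
  qed
  have fii: "\<not> E (\<sigma> b) (\<sigma> c)" if bc: "p < b" "b \<le> t" "t < c" "c \<le> n" for b c
  proof
    assume e: "E (\<sigma> b) (\<sigma> c)"
    have ne: "\<not> E (\<sigma> b) (\<sigma> (t+1))" using tnext[of b] that sp by auto
    show False
    proof (cases "c = t+1")
      case True thus False using ne e by simp
    next
      case False
      then obtain l where "b < l" "l < t+1" "E (\<sigma> l) (\<sigma> (t+1))"
        using F[of b "t+1" c] bc e ne sp \<open>c \<noteq> t+1\<close> by auto
      thus False using tnext[of l] bc sp by auto
    qed
  qed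
  have fiii: "\<exists>l. (l = s \<or> p < l) \<and> l < j \<and> E (\<sigma> l) (\<sigma> j)" if jj: "p < j" "j \<le> t" for j
  proof -
    obtain l where l: "s \<le> l" "l < j" "E (\<sigma> l) (\<sigma> j)" using t(3)[of j] jj by auto
    have "\<not> (s < l \<and> l \<le> p)" using fi[of l j] l jj t by auto
    thus ?thesis using l by (intro exI[of _ l]) auto
  qed
  define m where "m = t - p"
  define d where "d = p - s"
  define \<pi> where "\<pi> j = (if j \<le> s then j else if j \<le> s + m then j + d else if j \<le> t then j - m else j)" for j
  have \<pi>_into: "\<pi> ` {1..n} \<subseteq> {1..n}" unfolding \<pi>_def m_def d_def using sp t by auto
  have \<pi>_inj: "inj_on \<pi> {1..n}" unfolding inj_on_def \<pi>_def m_def d_def using sp t by auto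
  have \<pi>_onto: "\<pi> ` {1..n} = {1..n}" using endo_inj_surj[OF _ \<pi>_into \<pi>_inj] by simp
  have \<pi>_bij: "bij_betw \<pi> {1..n} {1..n}" using \<pi>_inj \<pi>_onto bij_betw_def by blast
  define \<sigma>' where "\<sigma>' = \<sigma> \<circ> \<pi>"
  have bij': "bij_betw \<sigma>' {1..n} V" unfolding \<sigma>'_def using bij_betw_trans[OF \<pi>_bij bij] .
  have four': "four E \<sigma>' n" unfolding four_def
  proof (intro allI impI)
    fix i j k assume h: "1 \<le> i" "i < j" "j < k" "k \<le> n" "E (\<sigma>' i) (\<sigma>' k)" "\<not> E (\<sigma>' i) (\<sigma>' j)"
    have hE: "E (\<sigma> (\<pi> i)) (\<sigma> (\<pi> k))" "\<not> E (\<sigma> (\<pi> i)) (\<sigma> (\<pi> j))" using h unfolding \<sigma>'_def by auto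
    have pP: "\<pi> x = x" if "x \<le> s" for x using that unfolding \<pi>_def by auto
    have pB: "\<pi> x = x + d" if "s < x" "x \<le> s + m" for x using that unfolding \<pi>_def by auto
    have pA: "\<pi> x = x - m" if "s + m < x" "x \<le> t" for x using that unfolding \<pi>_def by auto
    have pR: "\<pi> x = x" if "t < x" for x using that sp t unfolding \<pi>_def m_def d_def by auto
    have md: "m = t - p" "d = p - s" "s < p" "p < t" "t \<le> n" using m_def d_def sp t by auto
    have goal: "\<exists>l. i < l \<and> l < j \<and> E (\<sigma>' l) (\<sigma>' j)"
      if L: "1 \<le> L" "L \<le> n" "E (\<sigma> L) (\<sigma> (\<pi> j))" "\<And>l. l \<in> {1..n} \<Longrightarrow> \<pi> l = L \<Longrightarrow> i < l \<and> l < j" for L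
    proof -
      obtain l where l: "l \<in> {1..n}" "\<pi> l = L" using \<pi>_onto L by (metis atLeastAtMost_iff imageE)
      thus ?thesis using L(3) L(4)[OF l] unfolding \<sigma>'_def by auto
    qed
    have pre: "l = l'"
      if "l \<in> {1..n}" "l' \<in> {1..n}" "\<pi> l = \<pi> l'" for l l'
      using \<pi>_inj that unfolding inj_on_def by metis
    consider (P) "i \<le> s" | (B) "s < i" "i \<le> s + m" | (A) "s + m < i" "i \<le> t" | (R) "t < i" by linarith
    then show "\<exists>l. i < l \<and> l < j \<and> E (\<sigma>' l) (\<sigma>' j)"
    proof cases
      case R
      have e: "\<pi> i = i" "\<pi> j = j" "\<pi> k = k" using R h pR by auto
      obtain L where L: "i < L" "L < j" "E (\<sigma> L) (\<sigma> j)" using F[of i j k] h hE[unfolded e] by blast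
      have eL: "\<pi> L = L" using L R pR by auto
      show ?thesis
      proof (rule goal[of L])
        show "1 \<le> L" "L \<le> n" "E (\<sigma> L) (\<sigma> (\<pi> j))" using L h e by auto
        fix l assume l: "l \<in> {1..n}" "\<pi> l = L"
        have r: "L \<in> {1..n}" using eL L h by auto
        hence "l = L" using l pre[of l "L"] eL L h by auto
        then show "i < l \<and> l < j" using r eL L h by auto
      qed
    next
      case A
      show ?thesis
      proof (cases "k \<le> t")
        case False
        thus ?thesis using fi[of "\<pi> i" "\<pi> k"] pA[of i] pR[of k] A md hE h by auto
      next
        case True
        have e: "\<pi> i = i - m" "\<pi> j = j - m" "\<pi> k = k - m" using A h True pA by auto
        have c: "1 \<le> i - m" "i - m < j - m" "j - m < k - m" "k - m \<le> n" using A h True md s(1) by auto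
        obtain L where L: "i - m < L" "L < j - m" "E (\<sigma> L) (\<sigma> (j - m))"
          using F[OF c hE[unfolded e]] by blast
        have "s + m < L + m" "L + m \<le> t" using L A h md True by auto
        hence eL: "\<pi> (L + m) = L" using pA[of "L + m"] by auto
        show ?thesis
        proof (rule goal[of L])
          show "1 \<le> L" "L \<le> n" "E (\<sigma> L) (\<sigma> (\<pi> j))" using L h e c by auto
          fix l assume l: "l \<in> {1..n}" "\<pi> l = L"
          have r: "L + m \<in> {1..n}" using eL L h A md by auto
          hence "l = L + m" using l pre[of l "L + m"] eL L h A md by auto
          then show "i < l \<and> l < j" using r eL L h A md by (auto; arith)
        qed
      qed
    next
      case B
      consider "k \<le> s + m" | "s + m < k" "k \<le> t" | "t < k" by linarith
      then show ?thesis
      proof cases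
        case 1
        have e: "\<pi> i = i + d" "\<pi> j = j + d" "\<pi> k = k + d" using B h 1 pB by auto
        have c: "1 \<le> i + d" "i + d < j + d" "j + d < k + d" "k + d \<le> n" using B h 1 md s(1) by auto
        obtain L where L: "i + d < L" "L < j + d" "E (\<sigma> L) (\<sigma> (j + d))"
          using F[OF c hE[unfolded e]] by blast
        have "s < L - d" "L - d \<le> s + m" using L B h 1 by arith+
        hence eL: "\<pi> (L - d) = L" using pB[of "L - d"] L md by auto
        show ?thesis
        proof (rule goal[of L])
          show "1 \<le> L" "L \<le> n" "E (\<sigma> L) (\<sigma> (\<pi> j))" using L h e c by auto
          fix l assume l: "l \<in> {1..n}" "\<pi> l = L"
          have r: "L - d \<in> {1..n}" using eL L h B md 1 by auto
          hence "l = L - d" using l pre[of l "L - d"] eL L h B md 1 by auto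
          then show "i < l \<and> l < j" using r eL L h B md 1 by (auto; arith)
        qed
      next
        case 2
        have "s < \<pi> k" "\<pi> k \<le> p" "p < \<pi> i" "\<pi> i \<le> n"
          using 2 pA[of k] pB[of i] B md h by auto
        from fi[OF this] sym hE(1) show ?thesis by blast
      next
        case 3
        thus ?thesis using fii[of "\<pi> i" "\<pi> k"] pR[of k] pB[of i] B md hE h by auto
      qed
    next
      case P
      have ei: "\<pi> i = i" using P pP by auto
      consider "j \<le> s" | "s < j" "j \<le> s + m" | "s + m < j" "j \<le> t" | "t < j" by linarith
      then show ?thesis
      proof cases
        case 1
        have ej: "\<pi> j = j" using 1 pP by auto
        have "j < \<pi> k" "\<pi> k \<le> n" using 1 h md unfolding \<pi>_def by auto
        hence c: "1 \<le> i" "i < j" "j < \<pi> k" "\<pi> k \<le> n" using h by auto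
        obtain L where L: "i < L" "L < j" "E (\<sigma> L) (\<sigma> j)"
          using F[OF c hE[unfolded ei ej]] by blast
        have eL: "\<pi> L = L" using L 1 pP by auto
        show ?thesis
        proof (rule goal[of L])
          show "1 \<le> L" "L \<le> n" "E (\<sigma> L) (\<sigma> (\<pi> j))" using L h ej by auto
          fix l assume l: "l \<in> {1..n}" "\<pi> l = L"
          have r: "L \<in> {1..n}" using eL L h by auto
          hence "l = L" using l pre[of l "L"] eL L h by auto
          then show "i < l \<and> l < j" using r eL L h by auto
        qed
      next
        case 2
        have ej: "\<pi> j = j + d" using 2 pB by auto
        have c: "p < j + d" "j + d \<le> t" using 2 md by auto
        obtain L where L: "L = s \<or> p < L" "L < j + d" "E (\<sigma> L) (\<sigma> (j + d))"
          using fiii[OF c] by blast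
        have "i \<noteq> s \<or> L \<noteq> s" using hE ei ej L by auto
        show ?thesis
        proof (cases "L = s")
          case True
          hence "i < s" using \<open>i \<noteq> s \<or> L \<noteq> s\<close> P by auto
          show ?thesis
          proof (rule goal[of L])
            show "1 \<le> L" "L \<le> n" "E (\<sigma> L) (\<sigma> (\<pi> j))" using L h ej True s md by auto
            fix l assume l: "l \<in> {1..n}" "\<pi> l = L"
            have r: "s \<in> {1..n}" using pP[of s] True \<open>i < s\<close> 2 s h by auto
            hence "l = s" using l pre[of l "s"] pP[of s] True \<open>i < s\<close> 2 s h by auto
            then show "i < l \<and> l < j" using r pP[of s] True \<open>i < s\<close> 2 s h by auto
          qed
        next
          case False
          hence pL: "p < L" using L by auto
          have "s < L - d" "L - d \<le> s + m" using L pL md 2 by auto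
          hence eL: "\<pi> (L - d) = L" using pB[of "L - d"] L pL md by auto
          show ?thesis
          proof (rule goal[of L])
            show "1 \<le> L" "L \<le> n" "E (\<sigma> L) (\<sigma> (\<pi> j))" using L h ej pL md c by auto
            fix l assume l: "l \<in> {1..n}" "\<pi> l = L"
            have r: "L - d \<in> {1..n}" using eL L pL P 2 md s h by auto
            hence "l = L - d" using l pre[of l "L - d"] eL L pL P 2 md s h by auto
            then show "i < l \<and> l < j" using r eL L pL P 2 md s h by auto
          qed
        qed
      next
        case 3
        have ej: "\<pi> j = j - m" using 3 pA by auto
        have "\<pi> j < \<pi> k" "\<pi> k \<le> n" using 3 h md unfolding \<pi>_def by auto
        hence c: "1 \<le> i" "i < \<pi> j" "\<pi> j < \<pi> k" "\<pi> k \<le> n" using h P 3 ej md by auto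
        obtain L where L: "i < L" "L < \<pi> j" "E (\<sigma> L) (\<sigma> (\<pi> j))"
          using F[OF c hE[unfolded ei]] by blast
        show ?thesis
        proof (rule goal[of L])
          show "1 \<le> L" "L \<le> n" "E (\<sigma> L) (\<sigma> (\<pi> j))" using L h c by auto
          fix l assume l: "l \<in> {1..n}" "\<pi> l = L"
          show "i < l \<and> l < j"
          proof (cases "L \<le> s")
            case True
            have r: "L \<in> {1..n}" using L c by auto
            hence "l = L" using l pre[of l "L"] pP[of L] True by auto
            then show ?thesis using r pP[of L] l L h P 3 True md by auto
          next
            case False
            have "s + m < L + m" "L + m \<le> t" using L False md ej 3 by auto
            hence eL: "\<pi> (L + m) = L" using pA[of "L + m"] by auto
            have r: "L + m \<in> {1..n}" using \<open>L + m \<le> t\<close> md by auto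
            hence "l = L + m" using l pre[of l "L + m"] eL by auto
            then show ?thesis using r False l L h P 3 md ej by (auto; arith)
          qed
        qed
      next
        case 4
        have e: "\<pi> j = j" "\<pi> k = k" using 4 h pR by auto
        obtain L where L: "i < L" "L < j" "E (\<sigma> L) (\<sigma> j)" using F[of i j k] h hE[unfolded e ei] by blast
        show ?thesis
        proof (rule goal[of L])
          show "1 \<le> L" "L \<le> n" "E (\<sigma> L) (\<sigma> (\<pi> j))" using L h e by auto
          fix l assume l: "l \<in> {1..n}" "\<pi> l = L"
          show "i < l \<and> l < j"
            using l L P 4 md unfolding \<pi>_def by (auto split: if_splits)
        qed
      qed
    qed
  qed
  define q where "q = p + m"
  have q: "p < q" "q \<le> n" "\<pi> q = p" unfolding q_def m_def \<pi>_def d_def using t sp by auto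
  have qinv: "\<not> E (\<sigma>' q) (\<sigma>' c)" if "q < c" "c \<le> n" for c
  proof -
    have "\<pi> c = c" "t < c" using that unfolding \<pi>_def q_def m_def d_def using t sp by auto
    thus ?thesis using fi[of p c] that q sp unfolding \<sigma>'_def by auto
  qed
  show ?thesis using bij' four' q qinv unfolding \<sigma>'_def by (intro exI[of _ \<sigma>'] exI[of _ q]) (auto simp: \<sigma>'_def)
qed

lemma iter:
  assumes sg: "simple_graph V E" and cg: "connected_graph V E"
  shows "bij_betw \<sigma> {1..card V} V \<Longrightarrow> four E \<sigma> (card V) \<Longrightarrow> 1 \<le> p \<Longrightarrow> p \<le> card V
    \<Longrightarrow> (\<And>c. p < c \<Longrightarrow> c \<le> card V \<Longrightarrow> \<not> E (\<sigma> p) (\<sigma> c))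
    \<Longrightarrow> \<exists>\<sigma>'. bij_betw \<sigma>' {1..card V} V \<and> four E \<sigma>' (card V) \<and> \<sigma>' (card V) = \<sigma> p"
proof (induction "card V - p" arbitrary: \<sigma> p rule: less_induct)
  case less
  show ?case
  proof (cases "p = card V")
    case True thus ?thesis using less.prems by blast
  next
    case False
    have sym: "\<And>x y. E x y \<Longrightarrow> E y x" using sg unfolding simple_graph_def by blast
    have pl: "p < card V" using False less.prems(4) by simp
    have "\<exists>\<sigma>' q. bij_betw \<sigma>' {1..card V} V \<and> four E \<sigma>' (card V) \<and> p < q \<and> q \<le> card V \<and> \<sigma>' q = \<sigma> p
     \<and> (\<forall>c. q < c \<longrightarrow> c \<le> card V \<longrightarrow> \<not> E (\<sigma>' q) (\<sigma>' c))"
      by (rule swap_step[OF sym less.prems(1,2) earlier[OF sg cg less.prems(1,2)] less.prems(3) pl less.prems(5)])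
    then obtain \<sigma>' q where h: "bij_betw \<sigma>' {1..card V} V" "four E \<sigma>' (card V)" "p < q" "q \<le> card V"
       "\<sigma>' q = \<sigma> p" "\<forall>c. q < c \<longrightarrow> c \<le> card V \<longrightarrow> \<not> E (\<sigma>' q) (\<sigma>' c)" by blast
    have "card V - q < card V - p" using h False less.prems by auto
    from less.hyps[OF this h(1,2)] h less.prems show ?thesis by auto
  qed
qed

lemma edge_mem: "a \<in> V \<Longrightarrow> a \<noteq> \<sigma> 1 \<Longrightarrow> L_parent V E \<sigma> a b \<Longrightarrow> {a, b} \<in> L_tree_edges V E \<sigma>"
  unfolding L_tree_edges_def mem_Collect_eq by (rule exI[of _ a], rule exI[of _ b]) simp

theorem theorem4:
  fixes V :: "'a set" and E :: "'a \<Rightarrow> 'a \<Rightarrow> bool" and v :: 'a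
  assumes "simple_graph V E" and "connected_graph V E" and "card V \<ge> 2" and "v \<in> V"
  shows "(\<exists>\<sigma>. dfs_ordering V E \<sigma> \<and> L_branch_leaf V E \<sigma> v)
     \<longleftrightarrow> (\<exists>\<sigma>. dfs_ordering V E \<sigma> \<and> \<sigma> (card V) = v)"
proof -
  note sg = assms(1) and cg = assms(2)
  have sym: "\<And>x y. E x y \<Longrightarrow> E y x" using sg unfolding simple_graph_def by blast
  have inV: "\<And>x y. E x y \<Longrightarrow> x \<in> V \<and> y \<in> V" using sg unfolding simple_graph_def by blast
  have irr: "\<And>x. \<not> E x x" using sg unfolding simple_graph_def by blast
  show ?thesis
  proof
    assume "\<exists>\<sigma>. dfs_ordering V E \<sigma> \<and> L_branch_leaf V E \<sigma> v"
    then obtain \<sigma> where d: "dfs_ordering V E \<sigma>" and lf: "L_branch_leaf V E \<sigma> v" by blast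
    have bij: "bij_betw \<sigma> {1..card V} V" and f: "four E \<sigma> (card V)"
      using d unfolding dfs_four vertex_ordering_def by simp_all
    define p where "p = pos V \<sigma> v"
    have p: "p \<in> {1..card V}" "\<sigma> p = v" using pos_in[OF bij assms(4)] p_def by auto
    have "v \<noteq> \<sigma> 1" using lf unfolding L_branch_leaf_def by simp
    hence p2: "2 \<le> p" using p by (cases "p = 1") auto
    have inv: "\<not> E (\<sigma> p) (\<sigma> c)" if c: "p < c" "c \<le> card V" for c
    proof
      assume e: "E (\<sigma> p) (\<sigma> c)"
      have ey: "E (\<sigma> p) (\<sigma> (p+1))"
      proof (rule ccontr)
        assume ne: "\<not> E (\<sigma> p) (\<sigma> (p+1))"
        show False
        proof (cases "c = p+1")
          case True thus False using ne e by simp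
        next
          case False
          have "1 \<le> p" "p < p + 1" "p + 1 < c" using False c p by auto
          from f[unfolded four_def, rule_format, OF this c(2) e ne]
          show False by auto
        qed
      qed
      have pp: "p + 1 \<le> card V" using c by auto
      have ps: "pos V \<sigma> (\<sigma> p) = p" "pos V \<sigma> (\<sigma> (p+1)) = p + 1"
        using pos_sigma[OF bij] p pp by auto
      have yV: "\<sigma> (p+1) \<in> V" using bij pp by (auto dest: bij_betwE)
      have y1: "\<sigma> (p+1) \<noteq> \<sigma> 1"
      proof
        assume "\<sigma> (p+1) = \<sigma> 1"
        hence "pos V \<sigma> (\<sigma> (p+1)) = pos V \<sigma> (\<sigma> 1)" by simp
        thus False using ps pos_sigma[OF bij, of 1] pp p2 by auto
      qed
      have par1: "L_parent V E \<sigma> (\<sigma> (p+1)) v" unfolding L_parent_def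
      proof (intro conjI allI impI)
        show "E (\<sigma> (p+1)) v" using ey sym p by auto
        show "pos V \<sigma> v < pos V \<sigma> (\<sigma> (p+1))" using ps p by auto
        fix u assume u: "E (\<sigma> (p+1)) u \<and> pos V \<sigma> u < pos V \<sigma> (\<sigma> (p+1))"
        thus "pos V \<sigma> u \<le> pos V \<sigma> v" using ps p by auto
      qed
      have e1: "{v, \<sigma> (p+1)} \<in> L_tree_edges V E \<sigma>"
        using edge_mem[OF yV y1 par1] by (simp add: insert_commute)
      obtain l where l: "1 \<le> l" "l < p" "L_parent V E \<sigma> (\<sigma> p) (\<sigma> l)"
        using parent_exists[OF sg cg bij f p2] p by auto
      have e2: "{v, \<sigma> l} \<in> L_tree_edges V E \<sigma>"
        using edge_mem[of v V \<sigma> E "\<sigma> l", OF assms(4) \<open>v \<noteq> \<sigma> 1\<close>] l p by simp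
      have "\<sigma> l \<noteq> \<sigma> (p+1)"
      proof
        assume "\<sigma> l = \<sigma> (p+1)"
        hence "pos V \<sigma> (\<sigma> l) = pos V \<sigma> (\<sigma> (p+1))" by simp
        thus False using ps pos_sigma[OF bij, of l] l p by auto
      qed
      moreover have "card {w. {v, w} \<in> L_tree_edges V E \<sigma>} = 1" using lf unfolding L_branch_leaf_def by simp
      moreover obtain x where "{w. {v, w} \<in> L_tree_edges V E \<sigma>} = {x}"
        using calculation(2) by (rule card_1_singletonE)
      ultimately show False using e1 e2 by (metis mem_Collect_eq singletonD)
    qed
    have "\<exists>\<sigma>'. bij_betw \<sigma>' {1..card V} V \<and> four E \<sigma>' (card V) \<and> \<sigma>' (card V) = \<sigma> p"
      using iter[OF sg cg bij f _ _ inv] p by auto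
    then obtain \<sigma>' where "bij_betw \<sigma>' {1..card V} V" "four E \<sigma>' (card V)" "\<sigma>' (card V) = \<sigma> p"
      by blast
    hence "dfs_ordering V E \<sigma>'" "\<sigma>' (card V) = v" using p by (auto simp: dfs_four vertex_ordering_def)
    thus "\<exists>\<sigma>. dfs_ordering V E \<sigma> \<and> \<sigma> (card V) = v" by blast
  next
    assume "\<exists>\<sigma>. dfs_ordering V E \<sigma> \<and> \<sigma> (card V) = v"
    then obtain \<sigma> where d: "dfs_ordering V E \<sigma>" and last: "\<sigma> (card V) = v" by blast
    have bij: "bij_betw \<sigma> {1..card V} V" and f: "four E \<sigma> (card V)"
      using d unfolding dfs_four vertex_ordering_def by simp_all
    have pv: "pos V \<sigma> v = card V" using pos_sigma[OF bij, of "card V"] last assms(3) by auto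
    have v1: "v \<noteq> \<sigma> 1"
    proof
      assume "v = \<sigma> 1"
      hence "pos V \<sigma> v = 1" using pos_sigma[OF bij, of 1] assms(3) by auto
      thus False using pv assms(3) by auto
    qed
    obtain l where l: "1 \<le> l" "l < card V" "L_parent V E \<sigma> v (\<sigma> l)"
      using parent_exists[OF sg cg bij f assms(3)] last by auto
    have "{w. {v, w} \<in> L_tree_edges V E \<sigma>} = {\<sigma> l}"
    proof (intro set_eqI iffI)
      fix w assume "w \<in> {\<sigma> l}"
      thus "w \<in> {w. {v, w} \<in> L_tree_edges V E \<sigma>}"
        using edge_mem[of v V \<sigma> E "\<sigma> l", OF assms(4) v1 l(3)] by simp
    next
      fix w assume "w \<in> {w. {v, w} \<in> L_tree_edges V E \<sigma>}"
      hence "\<exists>a b. {v, w} = {a, b} \<and> a \<in> V \<and> a \<noteq> \<sigma> 1 \<and> L_parent V E \<sigma> a b"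
        unfolding L_tree_edges_def mem_Collect_eq .
      then obtain a b where ab: "{v, w} = {a, b}" "a \<in> V" "a \<noteq> \<sigma> 1" "L_parent V E \<sigma> a b"
        by blast
      from ab(1) have "(v = a \<and> w = b) \<or> (v = b \<and> w = a)" by (auto simp: doubleton_eq_iff)
      thus "w \<in> {\<sigma> l}"
      proof
        assume h: "v = a \<and> w = b"
        hence pw: "L_parent V E \<sigma> v w" using ab by simp
        have wV: "w \<in> V" using pw inV unfolding L_parent_def by blast
        have lV: "\<sigma> l \<in> V" using l(3) inV unfolding L_parent_def by blast
        have "pos V \<sigma> w \<le> pos V \<sigma> (\<sigma> l)" using pw l(3) unfolding L_parent_def by blast
        moreover have "pos V \<sigma> (\<sigma> l) \<le> pos V \<sigma> w" using pw l(3) unfolding L_parent_def by blast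
        ultimately have "pos V \<sigma> w = pos V \<sigma> (\<sigma> l)" by simp
        hence "\<sigma> (pos V \<sigma> w) = \<sigma> (pos V \<sigma> (\<sigma> l))" by simp
        thus ?thesis using pos_in(2)[OF bij wV] pos_in(2)[OF bij lV] by simp
      next
        assume h: "v = b \<and> w = a"
        hence "pos V \<sigma> v < pos V \<sigma> w" using ab unfolding L_parent_def by simp
        moreover have "pos V \<sigma> w \<le> card V" using pos_in(1)[OF bij] ab h by auto
        ultimately show ?thesis using pv by simp
      qed
    qed
    thus "\<exists>\<sigma>. dfs_ordering V E \<sigma> \<and> L_branch_leaf V E \<sigma> v"
      using d v1 assms(4) unfolding L_branch_leaf_def by auto
  qed
qed

end
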